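(* Let $K\ge 1$, $T\ge 1$ and let $\ell_1,\dots,\ell_T\in[0,1]^K$ be arbitrary loss vectors. Then the regret of AdaHedge satisfies \[ \mathcal{R}^{\mathrm{ah}}_T\le 2\sqrt{\frac{L_T^*(T-L_T^* )}{T}\ln K}+\tfrac{16}{3}\ln K+2. \]
   Context: Hedge setting: there are $K$ experts; in round $t$ the learner chooses a probability vector $w_t=(w_{t,1},\dots,w_{t,K})$, then the loss vector $\ell_t=(\ell_{t,1},\dots,\ell_{t,K})$ is revealed and the learner suffers the Hedge loss $h_t=\sum_k w_{t,k}\ell_{t,k}$. Write $L_{t,k}=\sum_{s=1}^t \ell_{s,k}$ (with $L_{0,k}=0$), $L^*_t=\min_k L_{t,k}$, $H_T=\sum_{t=1}^T h_t$, and regret $\mathcal{R}_T=H_T-L^*_T$. Exponential weights with learning rate $\eta\in(0,\infty]$ at time $t$: $w_{t,k}=e^{-\eta L_{t-1,k}}/\sum_j e^{-\eta L_{t-1,j}}$ if $\eta<\infty$; if $\eta=\infty$, $w_t$ is uniform on $\{k: L_{t-1,k}=L^*_{t-1}\}$. If round $t$ uses learning rate $\eta_t$, the mix loss is $m_t=-\frac{1}{\eta_t}\ln\big(\sum_k w_{t,k}e^{-\eta_t\ell_{t,k}}\big)$ if $\eta_t<\infty$ and $m_t=L^*_t-L^*_{t-1}$ if $\eta_t=\infty$; the mixability gap is $\delta_t=h_t-m_t$, with $\Delta_t=\sum_{s\le t}\delta_s$. AdaHedge: $\Delta_0=0$ and, for $t=1,2,\dots$, the learning rate is $\eta^{\mathrm{ah}}_t=\ln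 K/\Delta^{\mathrm{ah}}_{t-1}$ (interpreted as $+\infty$ when $\Delta^{\mathrm{ah}}_{t-1}=0$), the weights $w^{\mathrm{ah}}_t$ are the exponential weights with learning rate $\eta^{\mathrm{ah}}_t$ computed from $L_{t-1}$, and $\Delta^{\mathrm{ah}}_t=\Delta^{\mathrm{ah}}_{t-1}+\delta^{\mathrm{ah}}_t$. $\mathcal{R}^{\mathrm{ah}}_T$ denotes the regret of AdaHedge. *)

theory Defs
  imports "HOL-Analysis.Analysis" "HOL-Library.Extended_Real"
begin

text \<open>Experts are indexed by k < K, rounds by t = 1, 2, ...; the loss of expert k
in round t is lossv t k.\<close>

definition cumL :: "(nat \<Rightarrow> nat \<Rightarrow> real) \<Rightarrow> nat \<Rightarrow> nat \<Rightarrow> real" where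
  "cumL lossv t k = (\<Sum>s=1..t. lossv s k)"

definition Lstar :: "(nat \<Rightarrow> nat \<Rightarrow> real) \<Rightarrow> nat \<Rightarrow> nat \<Rightarrow> real" where
  "Lstar lossv K t = Min ((\<lambda>k. cumL lossv t k) ` {..<K})"

definition exp_weights :: "(nat \<Rightarrow> nat \<Rightarrow> real) \<Rightarrow> nat \<Rightarrow> ereal \<Rightarrow> nat \<Rightarrow> nat \<Rightarrow> real" where
  "exp_weights lossv K eta t k =
     (if eta = \<infinity> then
        (let S = {j \<in> {..<K}. cumL lossv (t - 1) j = Lstar lossv K (t - 1)} in
           if k \<in> S then 1 / real (card S) else 0)
      else exp (- real_of_ereal eta * cumL lossv (t - 1) k) /
           (\<Sum>j<K. exp (- real_of_ereal eta * cumL lossv (t - 1) j)))"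

definition hedge_loss :: "(nat \<Rightarrow> nat \<Rightarrow> real) \<Rightarrow> nat \<Rightarrow> ereal \<Rightarrow> nat \<Rightarrow> real" where
  "hedge_loss lossv K eta t = (\<Sum>k<K. exp_weights lossv K eta t k * lossv t k)"

definition mix_loss :: "(nat \<Rightarrow> nat \<Rightarrow> real) \<Rightarrow> nat \<Rightarrow> ereal \<Rightarrow> nat \<Rightarrow> real" where
  "mix_loss lossv K eta t =
     (if eta = \<infinity> then Lstar lossv K t - Lstar lossv K (t - 1)
      else - (1 / real_of_ereal eta) *
             ln (\<Sum>k<K. exp_weights lossv K eta t k * exp (- real_of_ereal eta * lossv t k)))"

definition mix_gap :: "(nat \<Rightarrow> nat \<Rightarrow> real) \<Rightarrow> nat \<Rightarrow> ereal \<Rightarrow> nat \<Rightarrow> real" where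
  "mix_gap lossv K eta t = hedge_loss lossv K eta t - mix_loss lossv K eta t"

definition ah_rate :: "nat \<Rightarrow> real \<Rightarrow> ereal" where
  "ah_rate K D = (if D = 0 then \<infinity> else ereal (ln (real K) / D))"

fun ah_Delta :: "(nat \<Rightarrow> nat \<Rightarrow> real) \<Rightarrow> nat \<Rightarrow> nat \<Rightarrow> real" where
  "ah_Delta lossv K 0 = 0"
| "ah_Delta lossv K (Suc t) =
     ah_Delta lossv K t + mix_gap lossv K (ah_rate K (ah_Delta lossv K t)) (Suc t)"

definition ah_eta :: "(nat \<Rightarrow> nat \<Rightarrow> real) \<Rightarrow> nat \<Rightarrow> nat \<Rightarrow> ereal" where
  "ah_eta lossv K t = ah_rate K (ah_Delta lossv K (t - 1))"

definition ah_regret :: "(nat \<Rightarrow> nat \<Rightarrow> real) \<Rightarrow> nat \<Rightarrow> nat \<Rightarrow> real" where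
  "ah_regret lossv K T =
     (\<Sum>t=1..T. hedge_loss lossv K (ah_eta lossv K t) t) - Lstar lossv K T"

end

theory Submission
  imports Defs
begin

lemma fact_ge_3pow: "(2::real) * 3 ^ n \<le> fact (n + 2)"
proof (induct n)
  case 0 then show ?case by simp
next
  case (Suc n)
  have "fact (Suc n + 2) = (real n + 3) * fact (n + 2)"
    by (simp add: algebra_simps)
  also have "\<dots> \<ge> 3 * fact (n+2)"
    by (intro mult_right_mono) auto
  finally have b: "3 * fact (n+2) \<le> (fact (Suc n + 2)::real)" .
  have a: "(2::real)*3^Suc n = 3*(2*3^n)" by simp
  have "3*(2*3^n) \<le> 3 * (fact(n+2)::real)" using Suc by linarith
  then show ?case using a b by linarith
qed

lemma exp_bern:
  fixes s c :: real assumes sc: "\<bar>s\<bar> \<le> c" and c3: "c < 3"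
  shows "exp s \<le> 1 + s + s^2 / (2*(1 - c/3))"
proof -
  have c0: "0 \<le> c" using sc by linarith
  have geo: "(\<lambda>n. s^2/2 * (c/3)^n) sums (s^2/2 * (1 / (1 - c/3)))"
    by (intro sums_mult geometric_sums) (use c0 c3 in auto)
  have "(\<Sum>n. inverse (fact (n + 2)) * (s ^ (n + 2))) \<le> (\<Sum>n. s^2/2 * (c/3)^n)"
  proof (intro suminf_le allI)
    fix n
    have f: "inverse (fact (n + 2)) \<le> inverse ((2::real) * 3 ^ n)"
      by (rule le_imp_inverse_le) (use fact_ge_3pow in auto)
    have "s ^ (n+2) \<le> \<bar>s\<bar> ^ (n+2)" by (metis power_abs abs_ge_self)
    also have "\<dots> = s^2 * \<bar>s\<bar>^n" by (metis power_add power2_abs mult.commute)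
    also have "\<dots> \<le> s^2 * c^n" by (intro mult_left_mono power_mono) (use sc in auto)
    finally have p: "s ^ (n+2) \<le> s^2 * c^n" .
    have "inverse (fact (n + 2)) * (s ^ (n + 2)) \<le> inverse (fact (n + 2)) * (s^2 * c^n)"
      by (intro mult_left_mono p) auto
    also have "\<dots> \<le> inverse ((2::real) * 3 ^ n) * (s^2 * c^n)"
      by (intro mult_right_mono f) (use c0 in auto)
    also have "\<dots> = s^2/2 * (c/3)^n" by (simp add: power_divide field_simps)
    finally show "inverse (fact (n + 2)) * (s ^ (n + 2)) \<le> s^2/2 * (c/3)^n" .
  next
    show "summable (\<lambda>n. inverse (fact (n + 2)) * (s ^ (n + 2)))"
      using summable_exp[of s] by (subst summable_iff_shift[where k=2]) simp
  next
    show "summable (\<lambda>n. s^2/2 * (c/3)^n)" using geo by (rule sums_summable)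
  qed
  also have "\<dots> = s^2 / (2*(1 - c/3))" using sums_unique[OF geo] by simp
  finally show ?thesis using exp_first_two_terms[of s] by simp
qed

lemma gap_basic:
  fixes w l :: "nat \<Rightarrow> real" and x :: real and K :: nat
  assumes w0: "\<And>k. k<K \<Longrightarrow> 0 \<le> w k" and w1: "(\<Sum>k<K. w k) = 1"
    and l01: "\<And>k. k<K \<Longrightarrow> 0 \<le> l k \<and> l k \<le> 1" and x0: "0 < x"
  shows "exp(-x*(\<Sum>k<K. w k * l k)) \<le> (\<Sum>k<K. w k * exp (-x * l k))"
    "(\<Sum>k<K. w k * exp (-x * l k)) \<le> 1" "0 \<le> (\<Sum>k<K. w k * l k)" "(\<Sum>k<K. w k * l k) \<le> 1"
proof -
  define h where "h = (\<Sum>k<K. w k * l k)"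
  have "(\<Sum>k<K. w k * (exp(-x*h) * (1 - x*(l k - h)))) \<le> (\<Sum>k<K. w k * exp (-x * l k))"
  proof (rule sum_mono)
    fix k assume k: "k \<in> {..<K}"
    have "exp(-x*h) * (1 - x*(l k - h)) \<le> exp(-x*h) * exp(-x*(l k - h))"
      by (intro mult_left_mono) (auto simp: exp_ge_add_one_self[of "-x*(l k - h)", simplified])
    also have "\<dots> = exp (-x * l k)" by (simp add: exp_add[symmetric] algebra_simps)
    finally show "w k * (exp(-x*h) * (1 - x*(l k - h))) \<le> w k * exp (-x * l k)"
      using w0 k by (intro mult_left_mono) auto
  qed
  moreover have "(\<Sum>k<K. w k * (exp(-x*h) * (1 - x*(l k - h)))) =
     (\<Sum>k<K. exp(-x*h)*w k - (exp(-x*h)*x) * (w k * l k) + (exp(-x*h)*x*h) * w k)"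
    by (rule sum.cong) (auto simp: algebra_simps)
  moreover have "\<dots> = exp(-x*h) * (\<Sum>k<K. w k) - (exp(-x*h)*x) * h + (exp(-x*h)*x*h) * (\<Sum>k<K. w k)"
    by (simp add: sum.distrib sum_subtractf sum_distrib_left h_def)
  ultimately show "exp(-x*(\<Sum>k<K. w k * l k)) \<le> (\<Sum>k<K. w k * exp (-x * l k))"
    using w1 by (simp add: h_def)
  have "(\<Sum>k<K. w k * exp (-x * l k)) \<le> (\<Sum>k<K. w k)"
    by (rule sum_mono) (use w0 l01 x0 in \<open>auto intro!: mult_right_le_one_le\<close>)
  then show "(\<Sum>k<K. w k * exp (-x * l k)) \<le> 1" using w1 by simp
  show "0 \<le> (\<Sum>k<K. w k * l k)" by (rule sum_nonneg) (use w0 l01 in auto)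
  have "(\<Sum>k<K. w k * l k) \<le> (\<Sum>k<K. w k)"
    by (rule sum_mono) (use w0 l01 in \<open>auto intro!: mult_right_le_one_le\<close>)
  then show "(\<Sum>k<K. w k * l k) \<le> 1" using w1 by simp
qed

lemma gap_bounds:
  fixes w l :: "nat \<Rightarrow> real" and x :: real and K :: nat
  assumes w0: "\<And>k. k<K \<Longrightarrow> 0 \<le> w k" and w1: "(\<Sum>k<K. w k) = 1"
    and l01: "\<And>k. k<K \<Longrightarrow> 0 \<le> l k \<and> l k \<le> 1" and x0: "0 < x"
  defines "d \<equiv> (\<Sum>k<K. w k * l k) - (- (1/x) * ln (\<Sum>k<K. w k * exp (-x * l k)))"
  shows "0 \<le> d" "d \<le> 1"
    "2 * d / x \<le> (\<Sum>k<K. w k * (l k - (\<Sum>j<K. w j * l j))^2) + 2/3 * d"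
proof -
  define h where "h = (\<Sum>k<K. w k * l k)"
  define Z where "Z = (\<Sum>k<K. w k * exp (-x * l k))"
  define v where "v = (\<Sum>k<K. w k * (l k - h)^2)"
  note b = gap_basic[where w=w and l=l and x=x and K=K, OF w0 w1 l01 x0, folded h_def Z_def]
  have Zpos: "0 < Z" using b(1) exp_gt_zero[of "-x*h"] by linarith
  have dd: "d = h + ln Z / x" unfolding d_def h_def Z_def by simp
  have "ln (exp(-x*h)) \<le> ln Z" using b(1) Zpos by (subst ln_le_cancel_iff) auto
  then have "-x*h \<le> ln Z" by simp
  then have "-h \<le> ln Z / x" using x0 by (simp add: field_simps)
  then show d0: "0 \<le> d" using dd by simp
  have "ln Z \<le> 0" using b(2) Zpos by simp
  then have "ln Z / x \<le> 0" using x0 by (simp add: divide_nonpos_pos)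
  then show "d \<le> 1" using dd b(4) by simp
  have v0: "0 \<le> v" unfolding v_def by (rule sum_nonneg) (use w0 in auto)
  show "2 * d / x \<le> (\<Sum>k<K. w k * (l k - (\<Sum>j<K. w j * l j))^2) + 2/3 * d"
  proof (cases "x < 3")
    case False
    then have "2 * d / x \<le> 2 * d / 3" using d0 x0 by (intro divide_left_mono) auto
    then show ?thesis using v0 unfolding v_def h_def by simp
  next
    case True
    define q where "q = x^2 * v / (2*(1 - x/3))"
    have q0: "0 \<le> q" unfolding q_def using v0 True by auto
    have "Z = (\<Sum>k<K. w k * (exp(-x*h) * exp(x*(h - l k))))"
      unfolding Z_def by (rule sum.cong) (auto simp: exp_add[symmetric] algebra_simps)
    also have "\<dots> \<le> (\<Sum>k<K. w k * (exp(-x*h) * (1 + x*(h - l k) + (x*(h - l k))^2 / (2*(1 - x/3)))))"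
    proof (rule sum_mono)
      fix k assume k: "k \<in> {..<K}"
      have "\<bar>x*(h - l k)\<bar> \<le> x" using l01[of k] k b(3,4) x0 by (auto simp: abs_mult abs_le_iff)
      then have "exp(x*(h - l k)) \<le> 1 + x*(h - l k) + (x*(h - l k))^2 / (2*(1 - x/3))"
        by (rule exp_bern) (use True in auto)
      then show "w k * (exp(-x*h) * exp(x*(h - l k))) \<le> w k * (exp(-x*h) * (1 + x*(h - l k) + (x*(h - l k))^2 / (2*(1 - x/3))))"
        using w0 k by (intro mult_left_mono) auto
    qed
    also have "\<dots> = (\<Sum>k<K. exp(-x*h) * w k + (exp(-x*h)*x) * (w k * h - w k * l k) + (exp(-x*h) * (x^2 / (2*(1 - x/3)))) * (w k * (l k - h)^2))"
    proof (rule sum.cong[OF refl])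
      fix k
      define g where "g = x^2 / (2*(1 - x/3))"
      have c: "(x*(h - l k))^2 / (2*(1-x/3)) = g * (l k - h)^2" unfolding g_def by (simp add: power_mult_distrib power2_commute)
      show "w k * (exp(-x*h) * (1 + x*(h - l k) + (x*(h - l k))^2 / (2*(1 - x/3)))) = exp(-x*h) * w k + (exp(-x*h)*x) * (w k * h - w k * l k) + (exp(-x*h) * (x^2 / (2*(1 - x/3)))) * (w k * (l k - h)^2)"
        unfolding c g_def[symmetric] by (simp add: algebra_simps)
    qed
    also have "\<dots> = exp(-x*h) * (\<Sum>k<K. w k) + (exp(-x*h)*x) * (h * (\<Sum>k<K. w k) - h) + (exp(-x*h) * (x^2 / (2*(1 - x/3)))) * v"
    proof -
      define E where "E = exp(-x*h)"
      define G where "G = E * (x^2 / (2*(1 - x/3)))"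
      have s1: "(\<Sum>k<K. w k * h - w k * l k) = h * (\<Sum>k<K. w k) - h"
        by (simp add: sum_subtractf sum_distrib_right[symmetric] h_def mult.commute)
      have "(\<Sum>k<K. E * w k + (E*x) * (w k * h - w k * l k) + G * (w k * (l k - h)^2))
         = E * (\<Sum>k<K. w k) + (E*x) * (\<Sum>k<K. w k * h - w k * l k) + G * v"
        by (simp add: sum.distrib sum_distrib_left v_def)
      then show ?thesis unfolding E_def[symmetric] unfolding G_def[symmetric] s1 .
    qed
    also have "\<dots> = exp(-x*h) * (1 + q)" using w1 by (simp add: q_def algebra_simps)
    finally have Zle: "Z \<le> exp(-x*h) * (1 + q)" .
    have "ln Z \<le> ln (exp(-x*h) * (1 + q))" using Zle Zpos q0 by (subst ln_le_cancel_iff) auto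
    also have "\<dots> = -x*h + ln (1+q)" using q0 by (simp add: ln_mult)
    also have "\<dots> \<le> -x*h + q" using q0 ln_add_one_self_le_self by simp
    finally have "ln Z / x \<le> (-x*h + q)/x" using x0 by (simp add: divide_right_mono)
    then have dq: "d \<le> q / x" using dd x0 by (simp add: field_simps)
    have pos: "0 \<le> 2/x - 2/3" using True x0 by (simp add: field_simps)
    have "2 * d / x - 2/3 * d = d * (2/x - 2/3)" by (simp add: algebra_simps)
    also have "\<dots> \<le> q / x * (2/x - 2/3)" using dq pos by (rule mult_right_mono)
    also have "\<dots> = v"
    proof -
      have e1: "1 - x/3 = (3-x)/3" and e2: "2/x - 2/3 = 2*(3-x)/(3*x)" using x0 True by (auto simp: field_simps)
      have "3 - x \<noteq> 0" using True by simp
      then show ?thesis unfolding q_def e1 e2 using x0 by (simp add: power2_eq_square)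
    qed
    finally show ?thesis unfolding v_def h_def by simp
  qed
qed

declare lessThan_empty_iff[simp]

lemma cumL_0[simp]: "cumL l 0 k = 0" by (simp add: cumL_def)
lemma cumL_Suc: "cumL l (Suc t) k = cumL l t k + l (Suc t) k"
  by (simp add: cumL_def)

lemma Lstar_le: "k < K \<Longrightarrow> Lstar l K t \<le> cumL l t k"
  unfolding Lstar_def by (rule Min_le) auto

lemma Lstar_ex: "1 \<le> K \<Longrightarrow> \<exists>k<K. Lstar l K t = cumL l t k"
proof -
  assume "1 \<le> K"
  then have "Lstar l K t \<in> (\<lambda>k. cumL l t k) ` {..<K}" unfolding Lstar_def by (intro Min_in) auto
  then show ?thesis by auto
qed

lemma Lstar_0: "1 \<le> K \<Longrightarrow> Lstar l K 0 = 0"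
  using Lstar_ex[of K l 0] by auto

lemma weights_nonneg: "0 \<le> exp_weights l K eta t k"
  unfolding exp_weights_def Let_def by (auto intro!: divide_nonneg_nonneg sum_nonneg)

lemma weights_sum: assumes "1 \<le> K" shows "(\<Sum>k<K. exp_weights l K eta t k) = 1"
proof (cases "eta = \<infinity>")
  case True
  define S where "S = {j \<in> {..<K}. cumL l (t - 1) j = Lstar l K (t - 1)}"
  have S: "finite S" "S \<noteq> {}" "S \<subseteq> {..<K}" using Lstar_ex[OF assms, of l "t-1"] by (auto simp: S_def)
  have "(\<Sum>k<K. exp_weights l K eta t k) = (\<Sum>k<K. if k \<in> S then 1 / real (card S) else 0)"
    using True unfolding exp_weights_def Let_def S_def[symmetric] by simp
  also have "\<dots> = (\<Sum>k\<in>S. 1 / real (card S))" using S by (simp add: sum.If_cases Int_absorb1)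
  also have "\<dots> = 1" using S by simp
  finally show ?thesis .
next
  case False
  have pos: "0 < (\<Sum>j<K. exp (- real_of_ereal eta * cumL l (t - 1) j))"
    using assms by (intro sum_pos) auto
  show ?thesis using False pos by (simp add: exp_weights_def sum_divide_distrib[symmetric])
qed

definition Phi :: "(nat \<Rightarrow> nat \<Rightarrow> real) \<Rightarrow> nat \<Rightarrow> ereal \<Rightarrow> nat \<Rightarrow> real" where
  "Phi l K eta t = (if eta = \<infinity> then Lstar l K t else
     (- ln (\<Sum>k<K. exp (- real_of_ereal eta * cumL l t k)) + ln (real K)) / real_of_ereal eta)"

lemma mix_Phi:
  assumes K: "1 \<le> K" and t: "1 \<le> t" and x: "0 < x"
  shows "mix_loss l K (ereal x) t = Phi l K (ereal x) t - Phi l K (ereal x) (t - 1)"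
proof -
  obtain s where ts: "t = Suc s" using t by (cases t) auto
  define D where "D = (\<Sum>j<K. exp (- x * cumL l s j))"
  define N where "N = (\<Sum>j<K. exp (- x * cumL l t j))"
  have Dp: "0 < D" unfolding D_def using K by (intro sum_pos) auto
  have Np: "0 < N" unfolding N_def using K by (intro sum_pos) auto
  have "(\<Sum>k<K. exp_weights l K (ereal x) t k * exp (- x * l t k)) = (\<Sum>k<K. exp (- x * cumL l t k) / D)"
    by (rule sum.cong) (auto simp: exp_weights_def D_def ts cumL_Suc exp_add[symmetric] algebra_simps)
  also have "\<dots> = N / D" by (simp add: N_def sum_divide_distrib)
  finally have e: "(\<Sum>k<K. exp_weights l K (ereal x) t k * exp (- x * l t k)) = N / D" .
  have "mix_loss l K (ereal x) t = - (1/x) * (ln N - ln D)"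
    unfolding mix_loss_def using e Dp Np by (simp add: ln_div)
  also have "\<dots> = Phi l K (ereal x) t - Phi l K (ereal x) (t - 1)"
    unfolding Phi_def using x by (simp add: N_def D_def ts field_simps)
  finally show ?thesis .
qed

lemma mix_Phi_inf:
  shows "mix_loss l K \<infinity> t = Phi l K \<infinity> t - Phi l K \<infinity> (t - 1)"
  by (simp add: mix_loss_def Phi_def)

lemma Phi_0: assumes K: "1 \<le> K" and "eta = \<infinity> \<or> (\<exists>x>0. eta = ereal x)" shows "Phi l K eta 0 = 0"
  using assms by (auto simp: Phi_def Lstar_0)

lemma Phi_ge_Lstar: assumes K: "1 \<le> K" and x: "0 < x"
  shows "Lstar l K t \<le> Phi l K (ereal x) t"
proof -
  define B where "B = (\<Sum>k<K. exp (- x * cumL l t k))"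
  have "B \<le> (\<Sum>k<K. exp (- x * Lstar l K t))" unfolding B_def
    using x by (intro sum_mono) (auto intro: Lstar_le)
  also have "\<dots> = real K * exp (- x * Lstar l K t)" by simp
  finally have Bl: "B \<le> real K * exp (- x * Lstar l K t)" .
  have Bp: "0 < B" unfolding B_def using K by (intro sum_pos) auto
  have "ln B \<le> ln (real K * exp (- x * Lstar l K t))" using Bl Bp by (subst ln_le_cancel_iff) auto
  also have "\<dots> = ln (real K) - x * Lstar l K t" using K by (simp add: ln_mult)
  finally have "x * Lstar l K t \<le> - ln B + ln (real K)" by simp
  then show ?thesis unfolding Phi_def using x by (simp add: B_def field_simps)
qed

lemma Phi_le: assumes K: "1 \<le> K" and x: "0 < x"
  shows "Phi l K (ereal x) t \<le> Lstar l K t + ln (real K) / x"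
proof -
  define B where "B = (\<Sum>k<K. exp (- x * cumL l t k))"
  obtain j where j: "j < K" "Lstar l K t = cumL l t j" using Lstar_ex[OF K] by blast
  have "exp (- x * cumL l t j) \<le> B" unfolding B_def
    by (rule member_le_sum) (use j in auto)
  moreover have "0 < B" unfolding B_def using K by (intro sum_pos) auto
  ultimately have "ln (exp (- x * cumL l t j)) \<le> ln B" by (subst ln_le_cancel_iff) auto
  then have "- ln B \<le> x * Lstar l K t" using j by simp
  then have "- ln B / x \<le> Lstar l K t" by (subst pos_divide_le_eq[OF x]) (simp add: mult.commute)
  then have "(- ln B + ln (real K)) / x \<le> Lstar l K t + ln (real K) / x" by (simp add: add_divide_distrib diff_divide_distrib)
  then show ?thesis unfolding Phi_def by (simp add: B_def)
qed

lemma Phi_mono_fin: assumes K: "1 \<le> K" and x: "0 < x" and xy: "x \<le> y"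
  shows "Phi l K (ereal y) t \<le> Phi l K (ereal x) t"
proof -
  define p where "p = y / x"
  have p1: "1 \<le> p" using x xy by (simp add: p_def)
  define a where "a = (\<lambda>k. exp (- x * cumL l t k))"
  have ap: "\<And>k. a k powr p = exp (- y * cumL l t k)"
    unfolding a_def p_def using x by (simp add: powr_def)
  have "(\<lambda>z. z powr p) (\<Sum>k<K. (1 / real K) *\<^sub>R a k) \<le> (\<Sum>k<K. (1 / real K) * (\<lambda>z. z powr p) (a k))"
    by (rule convex_on_sum[OF _ _ powr_convex[OF p1]]) (use K in \<open>auto simp: a_def\<close>)
  then have J: "((\<Sum>k<K. a k) / real K) powr p \<le> (\<Sum>k<K. exp (- y * cumL l t k)) / real K"
    by (simp add: ap sum_divide_distrib[symmetric] sum_distrib_left[symmetric])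
  define A where "A = (\<Sum>k<K. a k)"
  define B where "B = (\<Sum>k<K. exp (- y * cumL l t k))"
  have Ap: "0 < A" unfolding A_def a_def using K by (intro sum_pos) auto
  have Bp: "0 < B" unfolding B_def using K by (intro sum_pos) auto
  have Kp: "0 < real K" using K by simp
  have "ln ((A / real K) powr p) \<le> ln (B / real K)"
    using J Ap Bp Kp by (subst ln_le_cancel_iff) (auto simp: A_def B_def)
  then have "p * (ln A - ln (real K)) \<le> ln B - ln (real K)"
    using Ap Bp Kp by (simp add: ln_powr ln_div)
  then have "x * (p * (ln A - ln (real K))) \<le> x * (ln B - ln (real K))"
    using x by (intro mult_left_mono) auto
  moreover have "x * p = y" using x by (simp add: p_def)
  ultimately have "y * (ln A - ln (real K)) \<le> x * (ln B - ln (real K))"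
    by (metis mult.assoc)
  then have "(- ln B + ln (real K)) * x / (x*y) \<le> (- ln A + ln (real K)) * y / (x*y)"
    using x xy by (intro divide_right_mono) (auto simp: algebra_simps)
  moreover have "(- ln B + ln (real K)) * x / (x*y) = (- ln B + ln (real K)) / y" using x by simp
  moreover have "(- ln A + ln (real K)) * y / (x*y) = (- ln A + ln (real K)) / x" using x xy by simp
  ultimately have "(- ln B + ln (real K)) / y \<le> (- ln A + ln (real K)) / x" by simp
  then show ?thesis unfolding Phi_def by (simp add: A_def B_def a_def)
qed

definition valid :: "ereal \<Rightarrow> bool" where
  "valid eta \<longleftrightarrow> eta = \<infinity> \<or> (\<exists>x>0. eta = ereal x)"

lemma mix_Phi_valid: "1 \<le> K \<Longrightarrow> 1 \<le> t \<Longrightarrow> valid e \<Longrightarrow> mix_loss l K e t = Phi l K e t - Phi l K e (t - 1)"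
  unfolding valid_def using mix_Phi mix_Phi_inf by blast

lemma Phi_mono_valid: assumes "1 \<le> K" "valid e" "valid e'" "e' \<le> e"
  shows "Phi l K e t \<le> Phi l K e' t"
  using assms unfolding valid_def
proof (elim disjE exE conjE)
  fix x y assume "e = ereal y" "e' = ereal x" "0 < x" "0 < y"
  then show ?thesis using assms Phi_mono_fin by simp
next
  fix x assume "e = \<infinity>" "e' = ereal x" "0 < x"
  then show ?thesis using assms Phi_ge_Lstar by (simp add: Phi_def)
qed auto

lemma gap_inf: assumes K: "1 \<le> K" and t: "1 \<le> t" and l01: "\<And>k. k<K \<Longrightarrow> 0 \<le> l t k \<and> l t k \<le> 1"
  shows "0 \<le> mix_gap l K \<infinity> t" "mix_gap l K \<infinity> t \<le> 1"
proof -
  obtain s where ts: "t = Suc s" using t by (cases t) auto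
  define w where "w = exp_weights l K \<infinity> t"
  define m where "m = Lstar l K t - Lstar l K s"
  have w0: "\<And>k. 0 \<le> w k" unfolding w_def by (rule weights_nonneg)
  have w1: "(\<Sum>k<K. w k) = 1" unfolding w_def by (rule weights_sum[OF K])
  have "(\<Sum>k<K. w k * m) \<le> (\<Sum>k<K. w k * l t k)"
  proof (rule sum_mono)
    fix k assume k: "k \<in> {..<K}"
    show "w k * m \<le> w k * l t k"
    proof (cases "cumL l s k = Lstar l K s")
      case True
      have "Lstar l K t \<le> cumL l t k" using k by (intro Lstar_le) auto
      then have "m \<le> l t k" using True by (simp add: m_def ts cumL_Suc)
      then show ?thesis using w0 by (intro mult_left_mono) auto
    next
      case False
      then have "w k = 0" by (simp add: w_def exp_weights_def ts)
      then show ?thesis by simp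
    qed
  qed
  then have mh: "m \<le> hedge_loss l K \<infinity> t" using w1
    by (simp add: hedge_loss_def w_def sum_distrib_right[symmetric])
  obtain j where j: "j < K" "Lstar l K t = cumL l t j" using Lstar_ex[OF K] by blast
  have "Lstar l K s \<le> cumL l s j" using j by (intro Lstar_le) auto
  then have m0: "0 \<le> m" using j l01[of j] by (simp add: m_def ts cumL_Suc)
  have "hedge_loss l K \<infinity> t \<le> (\<Sum>k<K. w k)" unfolding hedge_loss_def w_def[symmetric]
    by (rule sum_mono) (use w0 l01 in \<open>auto intro!: mult_right_le_one_le\<close>)
  then have h1: "hedge_loss l K \<infinity> t \<le> 1" using w1 by simp
  have g: "mix_gap l K \<infinity> t = hedge_loss l K \<infinity> t - m"
    by (simp add: mix_gap_def mix_loss_def m_def ts)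
  show "0 \<le> mix_gap l K \<infinity> t" using g mh by simp
  show "mix_gap l K \<infinity> t \<le> 1" using g h1 m0 by simp
qed

definition var :: "(nat \<Rightarrow> nat \<Rightarrow> real) \<Rightarrow> nat \<Rightarrow> ereal \<Rightarrow> nat \<Rightarrow> real" where
  "var l K eta t = (\<Sum>k<K. exp_weights l K eta t k * (l t k - hedge_loss l K eta t)^2)"

lemma gap_fin: assumes K: "1 \<le> K" and l01: "\<And>k. k<K \<Longrightarrow> 0 \<le> l t k \<and> l t k \<le> 1" and x: "0 < x"
  shows "0 \<le> mix_gap l K (ereal x) t" "mix_gap l K (ereal x) t \<le> 1"
    "2 * mix_gap l K (ereal x) t / x \<le> var l K (ereal x) t + 2/3 * mix_gap l K (ereal x) t"
proof -
  note G = gap_bounds[of K "exp_weights l K (ereal x) t" "l t" x, OF weights_nonneg weights_sum[OF K] l01 x]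
  have e: "mix_gap l K (ereal x) t = (\<Sum>k<K. exp_weights l K (ereal x) t k * l t k) -
     - (1 / x) * ln (\<Sum>k<K. exp_weights l K (ereal x) t k * exp (- x * l t k))"
    by (simp add: mix_gap_def hedge_loss_def mix_loss_def)
  show "0 \<le> mix_gap l K (ereal x) t" "mix_gap l K (ereal x) t \<le> 1"
    "2 * mix_gap l K (ereal x) t / x \<le> var l K (ereal x) t + 2/3 * mix_gap l K (ereal x) t"
    using G unfolding e var_def hedge_loss_def by auto
qed

lemma var_bound: assumes K: "1 \<le> K" and l01: "\<And>k. k<K \<Longrightarrow> 0 \<le> l t k \<and> l t k \<le> 1"
  shows "0 \<le> var l K eta t" "var l K eta t \<le> hedge_loss l K eta t * (1 - hedge_loss l K eta t)"
    "0 \<le> hedge_loss l K eta t" "hedge_loss l K eta t \<le> 1"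
proof -
  define w where "w = exp_weights l K eta t"
  define h where "h = hedge_loss l K eta t"
  have w0: "\<And>k. 0 \<le> w k" unfolding w_def by (rule weights_nonneg)
  have w1: "(\<Sum>k<K. w k) = 1" unfolding w_def by (rule weights_sum[OF K])
  have hd: "h = (\<Sum>k<K. w k * l t k)" by (simp add: h_def w_def hedge_loss_def)
  show "0 \<le> var l K eta t" unfolding var_def by (rule sum_nonneg) (use weights_nonneg in auto)
  have "var l K eta t = (\<Sum>k<K. w k * (l t k)^2 - (2*h) * (w k * l t k) + h^2 * w k)"
    unfolding var_def w_def[symmetric] h_def[symmetric] by (rule sum.cong) (auto simp: power2_eq_square algebra_simps)
  also have "\<dots> = (\<Sum>k<K. w k * (l t k)^2) - h^2"
    by (simp add: sum.distrib sum_subtractf sum_distrib_left[symmetric] hd[symmetric] w1 power2_eq_square)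
  also have "(\<Sum>k<K. w k * (l t k)^2) \<le> (\<Sum>k<K. w k * l t k)"
  proof (rule sum_mono)
    fix k assume "k \<in> {..<K}"
    then have "(l t k)^2 \<le> l t k" using l01[of k] by (auto simp: power2_eq_square intro: mult_left_le_one_le)
    then show "w k * (l t k)^2 \<le> w k * l t k" using w0 by (intro mult_left_mono) auto
  qed
  finally show "var l K eta t \<le> h * (1 - h)" using hd by (simp add: power2_eq_square algebra_simps)
  show "0 \<le> h" unfolding hd by (rule sum_nonneg) (use w0 l01 in auto)
  have "h \<le> (\<Sum>k<K. w k)" unfolding hd
    by (rule sum_mono) (use w0 l01 in \<open>auto intro!: mult_right_le_one_le\<close>)
  then show "h \<le> 1" using w1 by simp
qed

lemma gap_K1: "1 \<le> t \<Longrightarrow> mix_gap l 1 \<infinity> t = 0"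
proof -
  assume t: "1 \<le> t"
  obtain s where ts: "t = Suc s" using t by (cases t) auto
  have Ls: "\<And>u. Lstar l (Suc 0) u = cumL l u 0" by (simp add: Lstar_def lessThan_Suc)
  have c: "{j. j = (0::nat) \<and> cumL l s j = cumL l s 0} = {0}" by auto
  have w: "exp_weights l (Suc 0) \<infinity> (Suc s) 0 = 1" by (simp add: exp_weights_def Ls lessThan_Suc Let_def ts c)
  have c: "{j. j = (0::nat) \<and> cumL l s j = cumL l s 0} = {0}" by auto
  show ?thesis by (simp add: mix_gap_def hedge_loss_def mix_loss_def w Ls ts cumL_Suc)
qed

context
  fixes l :: "nat \<Rightarrow> nat \<Rightarrow> real" and K T :: nat
  assumes K: "1 \<le> K" and bnd: "\<And>t k. t \<in> {1..T} \<Longrightarrow> k < K \<Longrightarrow> 0 \<le> l t k \<and> l t k \<le> 1"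
begin

lemma gap_step:
  assumes n: "Suc n \<le> T" and D0: "0 \<le> ah_Delta l K n" and D1: "K = 1 \<longrightarrow> ah_Delta l K n = 0"
  shows "0 \<le> mix_gap l K (ah_rate K (ah_Delta l K n)) (Suc n)"
    "mix_gap l K (ah_rate K (ah_Delta l K n)) (Suc n) \<le> 1"
    "2 * mix_gap l K (ah_rate K (ah_Delta l K n)) (Suc n) * ah_Delta l K n
      \<le> ln (real K) * var l K (ah_rate K (ah_Delta l K n)) (Suc n) + 2/3 * ln (real K) * mix_gap l K (ah_rate K (ah_Delta l K n)) (Suc n)"
proof -
  have l01: "\<And>k. k<K \<Longrightarrow> 0 \<le> l (Suc n) k \<and> l (Suc n) k \<le> 1" using bnd n by auto
  have lnK: "0 \<le> ln (real K)" using K by simp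
  have v0: "0 \<le> var l K (ah_rate K (ah_Delta l K n)) (Suc n)" by (rule var_bound(1)[where l=l and t="Suc n", OF K l01])
  define g where "g = mix_gap l K (ah_rate K (ah_Delta l K n)) (Suc n)"
  have "0 \<le> g \<and> g \<le> 1 \<and> 2 * g * ah_Delta l K n \<le> ln (real K) * var l K (ah_rate K (ah_Delta l K n)) (Suc n) + 2/3 * ln (real K) * g"
  proof (cases "ah_Delta l K n = 0")
    case True
    then have "0 \<le> g \<and> g \<le> 1" using gap_inf[where l=l and t="Suc n", OF K _ l01] by (simp add: g_def ah_rate_def)
    then show ?thesis using True lnK v0 by simp
  next
    case False
    then have Dp: "0 < ah_Delta l K n" using D0 by simp
    have K2: "2 \<le> K" using False D1 K by linarith
    then have lnp: "0 < ln (real K)" by simp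
    define x where "x = ln (real K) / ah_Delta l K n"
    have xp: "0 < x" using lnp Dp by (simp add: x_def)
    have r: "ah_rate K (ah_Delta l K n) = ereal x" using False by (simp add: ah_rate_def x_def)
    note G = gap_fin[where l=l and t="Suc n", OF K l01 xp, folded r g_def]
    have Dx: "ah_Delta l K n = ln (real K) / x" using xp lnp Dp by (simp add: x_def)
    have "2 * g * ah_Delta l K n = ln (real K) * (2 * g / x)" by (simp add: Dx)
    also have "\<dots> \<le> ln (real K) * (var l K (ah_rate K (ah_Delta l K n)) (Suc n) + 2/3 * g)"
      using G(3) lnK unfolding g_def by (intro mult_left_mono) auto
    finally show ?thesis using G(1,2) unfolding g_def by (simp add: algebra_simps)
  qed
  then show "0 \<le> mix_gap l K (ah_rate K (ah_Delta l K n)) (Suc n)"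
    "mix_gap l K (ah_rate K (ah_Delta l K n)) (Suc n) \<le> 1"
    "2 * mix_gap l K (ah_rate K (ah_Delta l K n)) (Suc n) * ah_Delta l K n
      \<le> ln (real K) * var l K (ah_rate K (ah_Delta l K n)) (Suc n) + 2/3 * ln (real K) * mix_gap l K (ah_rate K (ah_Delta l K n)) (Suc n)"
    unfolding g_def by auto
qed

lemma Dinv: "n \<le> T \<Longrightarrow> 0 \<le> ah_Delta l K n \<and> (K = 1 \<longrightarrow> ah_Delta l K n = 0)"
proof (induction n)
  case 0 then show ?case by simp
next
  case (Suc n)
  then have IH: "0 \<le> ah_Delta l K n" "K = 1 \<longrightarrow> ah_Delta l K n = 0" by auto
  note G = gap_step[OF Suc.prems IH]
  have "K = 1 \<longrightarrow> ah_Delta l K (Suc n) = 0"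
    using IH gap_K1[of "Suc n" l] by (auto simp: ah_rate_def)
  then show ?case using IH G(1) by simp
qed

lemma gap_step': "Suc n \<le> T \<Longrightarrow> 0 \<le> mix_gap l K (ah_rate K (ah_Delta l K n)) (Suc n)"
    "Suc n \<le> T \<Longrightarrow> mix_gap l K (ah_rate K (ah_Delta l K n)) (Suc n) \<le> 1"
    "Suc n \<le> T \<Longrightarrow> 2 * mix_gap l K (ah_rate K (ah_Delta l K n)) (Suc n) * ah_Delta l K n
      \<le> ln (real K) * var l K (ah_rate K (ah_Delta l K n)) (Suc n) + 2/3 * ln (real K) * mix_gap l K (ah_rate K (ah_Delta l K n)) (Suc n)"
  using gap_step Dinv[of n] by auto

lemma rate_valid: "n \<le> T \<Longrightarrow> valid (ah_rate K (ah_Delta l K n))"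
proof -
  assume n: "n \<le> T"
  note D = Dinv[OF n]
  show ?thesis
  proof (cases "ah_Delta l K n = 0")
    case False
    then have "2 \<le> K" using D K by linarith
    then have "0 < ln (real K) / ah_Delta l K n" using D False by simp
    then show ?thesis using False by (auto simp: valid_def ah_rate_def)
  qed (simp add: valid_def ah_rate_def)
qed

lemma rate_mono: "Suc n \<le> T \<Longrightarrow> ah_rate K (ah_Delta l K (Suc n)) \<le> ah_rate K (ah_Delta l K n)"
proof -
  assume n: "Suc n \<le> T"
  have D0: "0 \<le> ah_Delta l K n" using Dinv[of n] n by simp
  have le: "ah_Delta l K n \<le> ah_Delta l K (Suc n)" using gap_step'(1)[OF n] by simp
  show ?thesis
  proof (cases "ah_Delta l K n = 0")
    case False
    then have p: "0 < ah_Delta l K n" using D0 by simp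
    have lnK: "0 \<le> ln (real K)" using K by simp
    have "ln (real K) / ah_Delta l K (Suc n) \<le> ln (real K) / ah_Delta l K n"
      using p le lnK by (intro divide_left_mono) auto
    then show ?thesis using p le by (simp add: ah_rate_def)
  qed (simp add: ah_rate_def)
qed

lemma Delta_sum: "ah_Delta l K n = (\<Sum>t=1..n. mix_gap l K (ah_eta l K t) t)"
  by (induction n) (simp_all add: ah_eta_def)

lemma mix_tele: "n \<le> T \<Longrightarrow> (\<Sum>t=1..n. mix_loss l K (ah_eta l K t) t) \<le> Phi l K (ah_rate K (ah_Delta l K n)) n"
proof (induction n)
  case 0
  then show ?case using Phi_0[OF K] rate_valid[of 0] by (simp add: valid_def)
next
  case (Suc n)
  define e where "e = ah_rate K (ah_Delta l K n)"
  have ev: "valid e" unfolding e_def using rate_valid[of n] Suc.prems by simp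
  have "(\<Sum>t=1..Suc n. mix_loss l K (ah_eta l K t) t) = (\<Sum>t=1..n. mix_loss l K (ah_eta l K t) t) + mix_loss l K e (Suc n)"
    by (simp add: ah_eta_def e_def)
  also have "\<dots> \<le> Phi l K e n + (Phi l K e (Suc n) - Phi l K e n)"
    using Suc ev mix_Phi_valid[OF K _ ev, of "Suc n" l] by (simp add: e_def)
  also have "\<dots> = Phi l K e (Suc n)" by simp
  also have "\<dots> \<le> Phi l K (ah_rate K (ah_Delta l K (Suc n))) (Suc n)"
    using Phi_mono_valid[OF K ev rate_valid[OF Suc.prems] rate_mono[OF Suc.prems, folded e_def]] .
  finally show ?case .
qed

lemma regret_le: "1 \<le> T \<Longrightarrow> ah_regret l K T \<le> 2 * ah_Delta l K T"
proof -
  assume T: "1 \<le> T"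
  have "(\<Sum>t=1..T. hedge_loss l K (ah_eta l K t) t) =
     (\<Sum>t=1..T. mix_loss l K (ah_eta l K t) t) + (\<Sum>t=1..T. mix_gap l K (ah_eta l K t) t)"
    by (simp add: mix_gap_def sum.distrib[symmetric])
  also have "\<dots> = (\<Sum>t=1..T. mix_loss l K (ah_eta l K t) t) + ah_Delta l K T" by (simp add: Delta_sum)
  finally have H: "(\<Sum>t=1..T. hedge_loss l K (ah_eta l K t) t) = (\<Sum>t=1..T. mix_loss l K (ah_eta l K t) t) + ah_Delta l K T" .
  have M: "(\<Sum>t=1..T. mix_loss l K (ah_eta l K t) t) \<le> Phi l K (ah_rate K (ah_Delta l K T)) T"
    using mix_tele by simp
  have P: "Phi l K (ah_rate K (ah_Delta l K T)) T \<le> Lstar l K T + ah_Delta l K T"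
  proof (cases "ah_Delta l K T = 0")
    case True then show ?thesis by (simp add: ah_rate_def Phi_def)
  next
    case False
    have D: "0 \<le> ah_Delta l K T" "K = 1 \<longrightarrow> ah_Delta l K T = 0" using Dinv by auto
    then have Dp: "0 < ah_Delta l K T" using False by simp
    have "2 \<le> K" using D K False by linarith
    then have lnp: "0 < ln (real K)" by simp
    define x where "x = ln (real K) / ah_Delta l K T"
    have xp: "0 < x" using lnp Dp by (simp add: x_def)
    have "ln (real K) / x = ah_Delta l K T" using lnp Dp by (simp add: x_def)
    then show ?thesis using Phi_le[OF K xp, of l T] False by (simp add: ah_rate_def x_def)
  qed
  show ?thesis unfolding ah_regret_def using H M P by simp
qed

lemma bern_sum: "n \<le> T \<Longrightarrow> (ah_Delta l K n)^2 \<le> ln (real K) * (\<Sum>t=1..n. var l K (ah_eta l K t) t) + (2/3 * ln (real K) + 1) * ah_Delta l K n"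
proof (induction n)
  case 0 then show ?case by simp
next
  case (Suc n)
  define g where "g = mix_gap l K (ah_rate K (ah_Delta l K n)) (Suc n)"
  define v where "v = var l K (ah_rate K (ah_Delta l K n)) (Suc n)"
  have G: "0 \<le> g" "g \<le> 1" "2 * g * ah_Delta l K n \<le> ln (real K) * v + 2/3 * ln (real K) * g"
    using gap_step'[OF Suc.prems] unfolding g_def v_def by auto
  have IH: "(ah_Delta l K n)^2 \<le> ln (real K) * (\<Sum>t=1..n. var l K (ah_eta l K t) t) + (2/3 * ln (real K) + 1) * ah_Delta l K n"
    using Suc by simp
  have gg: "g^2 \<le> g" using G by (simp add: power2_eq_square mult_le_one mult_left_le_one_le)
  have e: "ah_Delta l K (Suc n) = ah_Delta l K n + g" by (simp add: g_def)
  have s: "(\<Sum>t=1..Suc n. var l K (ah_eta l K t) t) = (\<Sum>t=1..n. var l K (ah_eta l K t) t) + v"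
    by (simp add: v_def ah_eta_def)
  have "(ah_Delta l K (Suc n))^2 = (ah_Delta l K n)^2 + 2 * g * ah_Delta l K n + g^2"
    unfolding e by (simp add: power2_eq_square algebra_simps)
  also have "\<dots> \<le> ln (real K) * (\<Sum>t=1..n. var l K (ah_eta l K t) t) + (2/3 * ln (real K) + 1) * ah_Delta l K n
      + (ln (real K) * v + 2/3 * ln (real K) * g) + g"
    using IH G(3) gg by linarith
  also have "\<dots> = ln (real K) * (\<Sum>t=1..Suc n. var l K (ah_eta l K t) t) + (2/3 * ln (real K) + 1) * ah_Delta l K (Suc n)"
    unfolding s e by (simp add: algebra_simps)
  finally show ?case .
qed

lemma var_sum: "(\<Sum>t=1..T. var l K (ah_eta l K t) t) \<le> (\<Sum>t=1..T. hedge_loss l K (ah_eta l K t) t * (1 - hedge_loss l K (ah_eta l K t) t))"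
  by (rule sum_mono) (use var_bound(2)[OF K] bnd in auto)

lemma hedge_01: "t \<in> {1..T} \<Longrightarrow> 0 \<le> hedge_loss l K (ah_eta l K t) t \<and> hedge_loss l K (ah_eta l K t) t \<le> 1"
  using var_bound(3,4)[OF K] bnd by blast

lemma Lstar_bounds: "0 \<le> Lstar l K T \<and> Lstar l K T \<le> real T"
proof -
  obtain j where j: "j < K" "Lstar l K T = cumL l T j" using Lstar_ex[OF K] by blast
  have "0 \<le> cumL l T j" unfolding cumL_def by (rule sum_nonneg) (use bnd j in auto)
  moreover have "cumL l T j \<le> (\<Sum>s=1..T. 1)" unfolding cumL_def by (rule sum_mono) (use bnd j in auto)
  ultimately show ?thesis using j by simp
qed

end


lemma cs_sum:
  fixes f :: "nat \<Rightarrow> real" and T :: nat assumes T: "1 \<le> T"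
  shows "(\<Sum>t=1..T. f t * (1 - f t)) \<le> (\<Sum>t=1..T. f t) * (real T - (\<Sum>t=1..T. f t)) / real T"
proof -
  define H where "H = (\<Sum>t=1..T. f t)"
  define Q where "Q = (\<Sum>t=1..T. (f t)^2)"
  have Tp: "0 < real T" using T by simp
  define c where "c = H / real T"
  have "0 \<le> (\<Sum>t=1..T. (f t - c)^2)" by (rule sum_nonneg) auto
  also have "\<dots> = (\<Sum>t=1..T. (f t)^2 - (2 * c) * f t + c^2)"
    by (rule sum.cong) (auto simp: power2_eq_square algebra_simps)
  also have "\<dots> = Q - (2 * c) * H + real T * c^2"
    by (simp add: sum.distrib sum_subtractf sum_distrib_left[symmetric] Q_def H_def)
  also have "\<dots> = Q - H^2 / real T" using Tp by (simp add: c_def power2_eq_square field_simps)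
  finally have q: "H^2 / real T \<le> Q" by simp
  have "(\<Sum>t=1..T. f t * (1 - f t)) = H - Q"
    by (simp add: H_def Q_def algebra_simps power2_eq_square sum_subtractf)
  also have "\<dots> \<le> H - H^2 / real T" using q by simp
  also have "\<dots> = H * (real T - H) / real T" using Tp by (simp add: power2_eq_square field_simps)
  finally show ?thesis by (simp add: H_def)
qed

lemma final_alg:
  fixes R D V H Ls a T :: real
  assumes T: "0 < T" and a: "0 \<le> a" and D0: "0 \<le> D" and RD: "R \<le> 2 * D"
    and DD: "D^2 \<le> a * V + (2/3 * a + 1) * D" and V: "V \<le> H * (T - H) / T"
    and H: "H = Ls + R" and L0: "0 \<le> Ls" and LT: "Ls \<le> T"
  shows "R \<le> 2 * sqrt (Ls * (T - Ls) / T * a) + 16/3 * a + 2"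
proof (cases "R \<le> 0")
  case True
  have "0 \<le> Ls * (T - Ls) / T * a"
    by (intro mult_nonneg_nonneg divide_nonneg_pos) (use L0 LT T a in auto)
  then have "0 \<le> sqrt (Ls * (T - Ls) / T * a)" by simp
  then show ?thesis using True a by linarith
next
  case False
  define A where "A = Ls * (T - Ls) / T"
  have A0: "0 \<le> A" unfolding A_def using L0 LT T by simp
  have "H * (T - H) / T = A + R * (T - 2 * Ls - R) / T" unfolding H A_def using T
    by (simp add: field_simps)
  also have "R * (T - 2 * Ls - R) / T \<le> R"
  proof -
    have "R * (T - 2 * Ls - R) \<le> R * T" using False L0 by (simp add: algebra_simps)
    then show ?thesis using T by (simp add: divide_le_eq)
  qed
  finally have VA: "V \<le> A + 2 * D" using V RD by linarith
  define b where "b = 2/3 * a + 1"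
  define B where "B = 2 * a + b"
  define s where "s = sqrt (A * a)"
  have Aa: "0 \<le> A * a" by (rule mult_nonneg_nonneg[OF A0 a])
  have s0: "0 \<le> s" unfolding s_def using Aa by simp
  have ss: "s * s = A * a" unfolding s_def real_sqrt_mult_self using Aa by (rule abs_of_nonneg)
  have B0: "0 \<le> B" unfolding B_def b_def using a by simp
  have "a * V \<le> a * (A + 2 * D)" by (rule mult_left_mono[OF VA a])
  then have DD2: "D * (D - B) \<le> A * a" using DD unfolding B_def b_def by (simp add: power2_eq_square algebra_simps)
  have DB: "D \<le> B + s"
  proof (rule ccontr)
    assume "\<not> D \<le> B + s"
    then have g: "B + s < D" by simp
    have "s * s \<le> (B + s) * s" using B0 s0 by (simp add: algebra_simps)
    also have "\<dots> < D * (D - B)"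
    proof -
      have "(B + s) * s \<le> D * s" using g s0 by (intro mult_right_mono) auto
      also have "\<dots> < D * (D - B)" using g B0 s0 by (intro mult_strict_left_mono) auto
      finally show ?thesis .
    qed
    finally show False using DD2 ss by simp
  qed
  have "R \<le> 2 * B + 2 * s" using RD DB by linarith
  then show ?thesis unfolding B_def b_def s_def A_def by (simp add: algebra_simps)
qed


theorem theorem8:
  fixes lossv :: "nat \<Rightarrow> nat \<Rightarrow> real" and K T :: nat
  assumes "K \<ge> 1" and "T \<ge> 1"
    and "\<And>t k. t \<in> {1..T} \<Longrightarrow> k < K \<Longrightarrow> 0 \<le> lossv t k \<and> lossv t k \<le> 1"
  shows "ah_regret lossv K T
    \<le> 2 * sqrt (Lstar lossv K T * (real T - Lstar lossv K T) / real T * ln (real K))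
      + 16 / 3 * ln (real K) + 2"
proof (rule final_alg)
  show "0 < real T" using assms(2) by simp
  show "0 \<le> ln (real K)" using assms(1) by simp
  show "0 \<le> ah_Delta lossv K T" using Dinv[OF assms(1,3)] by simp
  show "ah_regret lossv K T \<le> 2 * ah_Delta lossv K T" using regret_le[OF assms(1,3,2)] .
  show "(ah_Delta lossv K T)^2 \<le> ln (real K) * (\<Sum>t=1..T. var lossv K (ah_eta lossv K t) t) + (2/3 * ln (real K) + 1) * ah_Delta lossv K T"
    using bern_sum[OF assms(1,3)] by simp
  show "(\<Sum>t=1..T. var lossv K (ah_eta lossv K t) t) \<le> (\<Sum>t=1..T. hedge_loss lossv K (ah_eta lossv K t) t) * (real T - (\<Sum>t=1..T. hedge_loss lossv K (ah_eta lossv K t) t)) / real T"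
    using var_sum[OF assms(1,3)] cs_sum[OF assms(2)] by (rule order_trans)
  show "(\<Sum>t=1..T. hedge_loss lossv K (ah_eta lossv K t) t) = Lstar lossv K T + ah_regret lossv K T"
    by (simp add: ah_regret_def)
  show "0 \<le> Lstar lossv K T" "Lstar lossv K T \<le> real T" using Lstar_bounds[OF assms(1,3)] by auto
qed

end
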